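(* Let $\Gamma_3^*\subseteq\mathbb{R}^7$ be the set of entropy vectors of triples of discrete random variables. Let $\mathbf{e}_1=[1,0,0,1,1,0,1]^\intercal$, $\mathbf{e}_2=[0,1,0,1,0,1,1]^\intercal$, $\mathbf{e}_3=[0,0,1,0,1,1,1]^\intercal$, $\mathbf{e}_{12}=[1,1,0,1,1,1,1]^\intercal$, $\mathbf{e}_{123'}=[1,1,1,2,2,2,2]^\intercal$, and let $\Omega=\mathrm{cone}(\mathbf{e}_1,\mathbf{e}_2,\mathbf{e}_3,\mathbf{e}_{12},\mathbf{e}_{123'})$ be the set of all nonnegative combinations of these vectors. Let $\Omega^{\mathrm{in}}$ be the set of all vectors $\lambda_1\mathbf{e}_1+\lambda_2\mathbf{e}_2+\lambda_3\mathbf{e}_3+\lambda_{12}\mathbf{e}_{12}+\lambda_{123'}\mathbf{e}_{123'}$ with all $\lambda_j\ge 0$ such that at least one of the following holds: (i) $\lambda_{12}+\lambda_{123'}\ge\log\lceil 2^{\lambda_{123'}}\rceil$; (ii) $\lambda_{123'}=\log m$ for some $m\in\mathbb{N}$. Then there exists an entropy vector $\mathbf{h}\in\Gamma_3^*$ lying in the relative interior of $\Omega$ (i.e., in $\Omega$ but in no proper face of $\Omega$) such that $\mathbf{h}\notin\Omega^{\mathrm{in}}$.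
   Context: All logarithms are base 2 and entropies are in bits. For a discrete random vector $(X_1,X_2,X_3)$, its entropy vector is $\mathbf{h}=[h_1,h_2,h_3,h_{12},h_{13},h_{23},h_{123}]^\intercal\in\mathbb{R}^7$, where $h_\alpha$ is the Shannon entropy of $(X_i)_{i\in\alpha}$. $\Omega$ is a face of the polymatroid cone $\Gamma_3$ (the set of $\mathbf{h}$ satisfying the Shannon elemental inequalities). *)

theory Defs
  imports "HOL-Analysis.Analysis" "HOL-Probability.Probability_Mass_Function"
begin

definition shannon_entropy :: "'a pmf \<Rightarrow> real" where
  "shannon_entropy q = (\<Sum>x\<in>set_pmf q. - (pmf q x * log 2 (pmf q x)))"

definition entropy_vector :: "('a \<times> 'b \<times> 'c) pmf \<Rightarrow> real ^ 7" where
  "entropy_vector p = vector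
     [shannon_entropy (map_pmf (\<lambda>(x,y,z). x) p),
      shannon_entropy (map_pmf (\<lambda>(x,y,z). y) p),
      shannon_entropy (map_pmf (\<lambda>(x,y,z). z) p),
      shannon_entropy (map_pmf (\<lambda>(x,y,z). (x,y)) p),
      shannon_entropy (map_pmf (\<lambda>(x,y,z). (x,z)) p),
      shannon_entropy (map_pmf (\<lambda>(x,y,z). (y,z)) p),
      shannon_entropy p]"

text \<open>Gamma_3^*: entropy vectors of triples of discrete (finite-alphabet) random variables.
  Alphabets are taken as subsets of nat (every finite alphabet embeds).\<close>
definition Gamma3_star :: "(real ^ 7) set" where
  "Gamma3_star = {entropy_vector p | p :: (nat \<times> nat \<times> nat) pmf. finite (set_pmf p)}"

definition e1 :: "real ^ 7" where "e1 = vector [1,0,0,1,1,0,1]"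
definition e2 :: "real ^ 7" where "e2 = vector [0,1,0,1,0,1,1]"
definition e3 :: "real ^ 7" where "e3 = vector [0,0,1,0,1,1,1]"
definition e12 :: "real ^ 7" where "e12 = vector [1,1,0,1,1,1,1]"
definition e123' :: "real ^ 7" where "e123' = vector [1,1,1,2,2,2,2]"

definition comb :: "real \<Rightarrow> real \<Rightarrow> real \<Rightarrow> real \<Rightarrow> real \<Rightarrow> real ^ 7" where
  "comb l1 l2 l3 l12 l123 = l1 *\<^sub>R e1 + l2 *\<^sub>R e2 + l3 *\<^sub>R e3 + l12 *\<^sub>R e12 + l123 *\<^sub>R e123'"

definition Omega :: "(real ^ 7) set" where
  "Omega = {comb l1 l2 l3 l12 l123 | l1 l2 l3 l12 l123.
              l1 \<ge> 0 \<and> l2 \<ge> 0 \<and> l3 \<ge> 0 \<and> l12 \<ge> 0 \<and> l123 \<ge> 0}"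

definition Omega_in :: "(real ^ 7) set" where
  "Omega_in = {comb l1 l2 l3 l12 l123 | l1 l2 l3 l12 l123.
              l1 \<ge> 0 \<and> l2 \<ge> 0 \<and> l3 \<ge> 0 \<and> l12 \<ge> 0 \<and> l123 \<ge> 0 \<and>
              (l12 + l123 \<ge> log 2 (real_of_int \<lceil>2 powr l123\<rceil>)
               \<or> (\<exists>m::nat. m \<ge> 1 \<and> l123 = log 2 (real m)))}"

end

theory Submission
  imports Defs
begin

lemma exhaust_7:
  fixes x :: 7
  shows "x = 1 \<or> x = 2 \<or> x = 3 \<or> x = 4 \<or> x = 5 \<or> x = 6 \<or> x = 7"
proof (induct x)
  case (of_int z)
  then have "z = 0 \<or> z = 1 \<or> z = 2 \<or> z = 3 \<or> z = 4 \<or> z = 5 \<or> z = 6" by fastforce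
  then show ?case by auto
qed

lemma vector_7 [simp]:
 "(vector [x1,x2,x3,x4,x5,x6,x7] ::('a::zero)^7)$1 = x1"
 "(vector [x1,x2,x3,x4,x5,x6,x7] ::('a::zero)^7)$2 = x2"
 "(vector [x1,x2,x3,x4,x5,x6,x7] ::('a::zero)^7)$3 = x3"
 "(vector [x1,x2,x3,x4,x5,x6,x7] ::('a::zero)^7)$4 = x4"
 "(vector [x1,x2,x3,x4,x5,x6,x7] ::('a::zero)^7)$5 = x5"
 "(vector [x1,x2,x3,x4,x5,x6,x7] ::('a::zero)^7)$6 = x6"
 "(vector [x1,x2,x3,x4,x5,x6,x7] ::('a::zero)^7)$7 = x7"
  unfolding vector_def by simp_all

lemma comb_comp [simp]:
  "comb a b c d e $ 1 = a + d + e"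
  "comb a b c d e $ 2 = b + d + e"
  "comb a b c d e $ 3 = c + e"
  "comb a b c d e $ 4 = a + b + d + 2*e"
  "comb a b c d e $ 5 = a + c + d + 2*e"
  "comb a b c d e $ 6 = b + c + d + 2*e"
  "comb a b c d e $ 7 = a + b + c + d + 2*e"
  by (simp_all add: comb_def e1_def e2_def e3_def e12_def e123'_def)

lemma comb_inj:
  assumes "comb a b c d e = comb a' b' c' d' e'"
  shows "a = a' \<and> b = b' \<and> c = c' \<and> d = d' \<and> e = e'"
proof -
  have "\<And>k. comb a b c d e $ k = comb a' b' c' d' e' $ k" using assms by simp
  from this[of 1] this[of 2] this[of 3] this[of 4] this[of 5] this[of 6] this[of 7]
  show ?thesis by simp
qed

lemma comb_add: "comb a b c d e + comb a' b' c' d' e' = comb (a+a') (b+b') (c+c') (d+d') (e+e')"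
  by (simp add: comb_def algebra_simps)

lemma comb_scale: "t *\<^sub>R comb a b c d e = comb (t*a) (t*b) (t*c) (t*d) (t*e)"
  by (simp add: comb_def algebra_simps)

lemma subspace_comb: "subspace (range (\<lambda>(a,b,c,d,e). comb a b c d e))"
  unfolding subspace_def
proof (intro conjI ballI allI)
  show "0 \<in> range (\<lambda>(a,b,c,d,e). comb a b c d e)"
    by (rule image_eqI[of _ _ "(0,0,0,0,0)"]) (auto simp: comb_def)
next
  fix x y assume "x \<in> range (\<lambda>(a,b,c,d,e). comb a b c d e)" "y \<in> range (\<lambda>(a,b,c,d,e). comb a b c d e)"
  then obtain a b c d e a' b' c' d' e' where "x = comb a b c d e" "y = comb a' b' c' d' e'" by auto
  then show "x + y \<in> range (\<lambda>(a,b,c,d,e). comb a b c d e)"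
    by (auto simp: comb_add intro!: image_eqI[of _ _ "(a+a',b+b',c+c',d+d',e+e')"])
next
  fix t and x :: "real^7" assume "x \<in> range (\<lambda>(a,b,c,d,e). comb a b c d e)"
  then obtain a b c d e where "x = comb a b c d e" by auto
  then show "t *\<^sub>R x \<in> range (\<lambda>(a,b,c,d,e). comb a b c d e)"
    by (auto simp: comb_scale intro!: image_eqI[of _ _ "(t*a,t*b,t*c,t*d,t*e)"])
qed

lemma comb_in_range: "comb a b c d e \<in> range (\<lambda>(a,b,c,d,e). comb a b c d e)"
  by (rule image_eqI[of _ _ "(a,b,c,d,e)"]) simp_all

lemma comp_close:
  fixes x y :: "real^7"
  assumes "dist x y \<le> r" shows "\<bar>x$k - y$k\<bar> \<le> r"
  using component_le_norm_cart[of "x - y" k] assms by (simp add: dist_norm)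

lemma relint:
  assumes "a > 0" "b > 0" "c > 0" "d > 0" "e > 0"
  shows "comb a b c d e \<in> rel_interior Omega"
proof -
  define h where "h = comb a b c d e"
  define r where "r = Min {a,b,c,d,e} / 4"
  have r: "r > 0" "r \<le> a/4" "r \<le> b/4" "r \<le> c/4" "r \<le> d/4" "r \<le> e/4"
    using assms by (auto simp: r_def)
  have hO: "h \<in> Omega" unfolding Omega_def h_def using assms by force
  have "affine hull Omega \<subseteq> range (\<lambda>(a,b,c,d,e). comb a b c d e)"
  proof -
    have "Omega \<subseteq> range (\<lambda>(a,b,c,d,e). comb a b c d e)" unfolding Omega_def using comb_in_range by auto
    then have "span Omega \<subseteq> range (\<lambda>(a,b,c,d,e). comb a b c d e)"
      using subspace_comb span_minimal by blast
    then show ?thesis using affine_hull_subset_span by blast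
  qed
  moreover have "cball h r \<inter> range (\<lambda>(a,b,c,d,e). comb a b c d e) \<subseteq> Omega"
  proof
    fix y assume "y \<in> cball h r \<inter> range (\<lambda>(a,b,c,d,e). comb a b c d e)"
    then obtain a' b' c' d' e' where y: "y = comb a' b' c' d' e'" and dy: "dist h y \<le> r" by auto
    have ck: "\<And>k. \<bar>comb a b c d e $ k - comb a' b' c' d' e' $ k\<bar> \<le> r"
      using comp_close[OF dy] unfolding y h_def .
    note c1 = ck[of 1, simplified comb_comp abs_le_iff]
    note c2 = ck[of 2, simplified comb_comp abs_le_iff]
    note c3 = ck[of 3, simplified comb_comp abs_le_iff]
    note c4 = ck[of 4, simplified comb_comp abs_le_iff]
    note c5 = ck[of 5, simplified comb_comp abs_le_iff]
    note c6 = ck[of 6, simplified comb_comp abs_le_iff]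
    note c7 = ck[of 7, simplified comb_comp abs_le_iff]
    have "a' \<ge> 0 \<and> b' \<ge> 0 \<and> c' \<ge> 0 \<and> d' \<ge> 0 \<and> e' \<ge> 0"
      using c1 c2 c3 c4 c5 c6 c7 r by linarith
    then show "y \<in> Omega" unfolding Omega_def y by blast
  qed
  ultimately have "cball h r \<inter> affine hull Omega \<subseteq> Omega" by blast
  then show ?thesis using hO r(1) mem_rel_interior_cball h_def by blast
qed

lemma map_list_pmf:
  assumes "xs \<noteq> []"
  shows "map_pmf g (map_pmf ((!) xs) (pmf_of_set {0..<length xs})) = pmf_of_multiset (mset (map g xs))"
proof -
  have "map_pmf g (map_pmf ((!) xs) (pmf_of_set {0..<length xs}))
      = map_pmf (g \<circ> (!) xs) (pmf_of_set {0..<length xs})" by (simp add: map_pmf_comp o_def)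
  also have "\<dots> = pmf_of_multiset (image_mset (g \<circ> (!) xs) (mset_set {0..<length xs}))"
    using assms by (intro map_pmf_of_set) auto
  also have "image_mset (g \<circ> (!) xs) (mset_set {0..<length xs}) = mset (map g xs)"
  proof -
    have "image_mset (g \<circ> (!) xs) (mset_set {0..<length xs}) = mset (map (g \<circ> (!) xs) [0..<length xs])"
      by (simp add: mset_upt[symmetric] del: mset_upt)
    also have "map (g \<circ> (!) xs) [0..<length xs] = map g xs"
      by (metis map_map map_nth)
    finally show ?thesis .
  qed
  finally show ?thesis .
qed

lemma ent_list:
  assumes "ys \<noteq> []"
  shows "shannon_entropy (pmf_of_multiset (mset ys)) =
    sum_list (map (\<lambda>x. - (real (count_list ys x) / real (length ys) * log 2 (real (count_list ys x) / real (length ys)))) (remdups ys))"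
proof -
  have ne: "mset ys \<noteq> {#}" using assms by simp
  show ?thesis
    unfolding shannon_entropy_def using ne
    by (simp add: sum.set_conv_list count_mset)
qed

definition xs0 :: "(nat \<times> nat \<times> nat) list" where
  "xs0 = [(0,0,0),(0,0,0),(0,1,1),(0,1,1),(1,1,0),(1,1,0),(1,0,1),(1,0,1),
          (2,0,0),(2,0,1),(3,1,0),(3,1,1),(4,0,0),(4,0,1),(4,1,0),(4,1,1)]"

definition p0 :: "(nat \<times> nat \<times> nat) pmf" where
  "p0 = map_pmf ((!) xs0) (pmf_of_set {0..<length xs0})"

lemma log4: "log 2 (4::real) = 2" using log_nat_power[of "2::real" 2 2] by simp
lemma log8: "log 2 (8::real) = 3" using log_nat_power[of "2::real" 2 3] by simp
lemma log16: "log 2 (16::real) = 4" using log_nat_power[of "2::real" 2 4] by simp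

lemma logs: "log 2 (1/2) = -1" "log 2 (1/4) = -2" "log 2 (1/8) = -3" "log 2 (1/16) = -4"
  by (simp_all add: log_divide log4 log8 log16)

lemma ent_map: "shannon_entropy (map_pmf g p0) =
    sum_list (map (\<lambda>x. - (real (count_list (map g xs0) x) / 16 * log 2 (real (count_list (map g xs0) x) / 16))) (remdups (map g xs0)))"
proof -
  have ne: "xs0 \<noteq> []" by (simp add: xs0_def)
  have len: "length xs0 = 16" by (simp add: xs0_def)
  have ne2: "map g xs0 \<noteq> []" using ne by simp
  show ?thesis
    unfolding p0_def map_list_pmf[OF ne] ent_list[OF ne2] by (simp only: length_map len) simp
qed

lemma p0_id: "p0 = map_pmf (\<lambda>x. x) p0" by simp

lemma ev: "entropy_vector p0 = comb (3/2) (1/4) (1/2) (1/4) (1/2)"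
proof -
  have h7: "shannon_entropy p0 = 7/2"
    by (subst p0_id, subst ent_map) (simp add: xs0_def logs)
  have h1: "shannon_entropy (map_pmf (\<lambda>(x,y,z). x) p0) = 9/4"
    by (subst ent_map) (simp add: xs0_def logs)
  have h2: "shannon_entropy (map_pmf (\<lambda>(x,y,z). y) p0) = 1"
    by (subst ent_map) (simp add: xs0_def logs)
  have h3: "shannon_entropy (map_pmf (\<lambda>(x,y,z). z) p0) = 1"
    by (subst ent_map) (simp add: xs0_def logs)
  have h4: "shannon_entropy (map_pmf (\<lambda>(x,y,z). (x,y)) p0) = 3"
    by (subst ent_map) (simp add: xs0_def logs)
  have h5: "shannon_entropy (map_pmf (\<lambda>(x,y,z). (x,z)) p0) = 13/4"
    by (subst ent_map) (simp add: xs0_def logs)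
  have h6: "shannon_entropy (map_pmf (\<lambda>(x,y,z). (y,z)) p0) = 2"
    by (subst ent_map) (simp add: xs0_def logs)
  show ?thesis
    unfolding entropy_vector_def vec_eq_iff h1 h2 h3 h4 h5 h6 h7
  proof
    fix i :: 7
    show "vector [9/4, 1, 1, 3, 13/4, 2, 7/2] $ i = comb (3 / 2) (1 / 4) (1 / 2) (1 / 4) (1 / 2) $ i"
      using exhaust_7[of i] by (elim disjE) (simp_all add: comb_comp)
  qed
qed

lemma notin: "comb (3/2) (1/4) (1/2) (1/4) (1/2) \<notin> Omega_in"
proof
  assume "comb (3/2) (1/4) (1/2) (1/4) (1/2) \<in> Omega_in"
  then obtain l1 l2 l3 l12 l123 where eq: "comb (3/2) (1/4) (1/2) (1/4) (1/2) = comb l1 l2 l3 l12 l123"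
    and c: "l12 + l123 \<ge> log 2 (real_of_int \<lceil>2 powr l123\<rceil>) \<or> (\<exists>m::nat. m \<ge> 1 \<and> l123 = log 2 (real m))"
    unfolding Omega_in_def by blast
  from comb_inj[OF eq] have l: "l12 = 1/4" "l123 = 1/2" by auto
  have "2 powr (1/2::real) = sqrt 2" by (simp add: powr_half_sqrt)
  moreover have "1 < sqrt (2::real)" by simp
  moreover have "sqrt (2::real) \<le> 2" using real_sqrt_le_iff[of "2::real" 4] by simp
  ultimately have "\<lceil>2 powr (1/2::real)\<rceil> = 2" by (simp add: ceiling_eq_iff)
  then have "\<not> (l12 + l123 \<ge> log 2 (real_of_int \<lceil>2 powr l123\<rceil>))" unfolding l by simp
  moreover have "\<not> (\<exists>m::nat. m \<ge> 1 \<and> l123 = log 2 (real m))"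
  proof
    assume "\<exists>m::nat. m \<ge> 1 \<and> l123 = log 2 (real m)"
    then obtain m :: nat where m: "m \<ge> 1" "1/2 = log 2 (real m)" using l by auto
    show False
    proof (cases "m = 1")
      case True then show False using m by simp
    next
      case False
      then have "real m \<ge> 2" using m by linarith
      then have "log 2 (real m) \<ge> 1" using log_le_cancel_iff[of 2 2 "real m"] by simp
      then show False using m(2) by linarith
    qed
  qed
  ultimately show False using c by blast
qed

theorem theorem5:
  shows "\<exists>h \<in> Gamma3_star. h \<in> rel_interior Omega \<and> h \<notin> Omega_in"
proof (intro bexI conjI)
  show "comb (3/2) (1/4) (1/2) (1/4) (1/2) \<in> rel_interior Omega" by (rule relint) auto
  show "comb (3/2) (1/4) (1/2) (1/4) (1/2) \<notin> Omega_in" by (rule notin)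
  have "finite (set_pmf p0)" unfolding p0_def using set_pmf_of_set[of "{0..<length xs0}"] by (simp add: xs0_def)
  then show "comb (3/2) (1/4) (1/2) (1/4) (1/2) \<in> Gamma3_star"
    unfolding Gamma3_star_def ev[symmetric] by blast
qed

end
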